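(* Let $\alpha\in(2,4)$ and $\psi,\phi\in C_b(\mathbb{R})$. For $E,F\in\mathbb{R}$ and $\eta_1,\eta_2\in(0,1]$ write $z=E+i\eta_1$, $w=F+i\eta_2$. Then for every $u>0$, \[ \sup_{\eta_1,\eta_2\le1}\iint_{\mathbb{R}^2}|\psi(E)||\phi(F)|\Big|\operatorname{Im}\Big\{\frac{2u^2m(z)m'(z)}{1-u^2m^2(z)}\Big\}\operatorname{Im}\Big\{\frac{2u^2m(w)m'(w)}{1-u^2m^2(w)}\Big\}\Big|\,\mathrm{d}E\,\mathrm{d}F\le18^2\|\psi\|_\infty\|\phi\|_\infty\big(u^4\mathbf{1}_{u<\frac12}+\mathbf{1}_{u\ge\frac12}\big), \] and \[ \int_0^\infty\frac{1}{u^{1+\alpha}}\sup_{\eta_1,\eta_2\le1}\bigg\{\iint_{\mathbb{R}^2}|\psi(E)||\phi(F)|\Big|\operatorname{Im}\Big\{\frac{2u^2m(z)m'(z)}{1-u^2m^2(z)}\Big\}\operatorname{Im}\Big\{\frac{2u^2m(w)m'(w)}{1-u^2m^2(w)}\Big\}\Big|\,\mathrm{d}E\,\mathrm{d}F\bigg\}\mathrm{d}u\le\frac{18^2\,2^\alpha}{4-\alpha}\|\psi\|_\infty\|\phi\|_\infty . \]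
   Context: $m(z)=\frac{z-\sqrt{z^2-4}}{2}$ is the Stieltjes transform of the semicircle law on $[-2,2]$ (satisfying $m(z)=1/(z-m(z))$, $|m(z)|<1$ off the real line). $C_b(\mathbb{R})$ is the space of bounded continuous functions with sup norm $\|\cdot\|_\infty$. *)

theory Defs
  imports "HOL-Analysis.Analysis"
begin

text \<open>Stieltjes transform of the semicircle law: for z off [-2,2] the unique
  solution of m = 1/(z - m) with |m| < 1 (equivalently the branch of
  (z - sqrt(z^2-4))/2 with |m(z)| < 1).\<close>
definition msc :: "complex \<Rightarrow> complex" where
  "msc z = (THE m. m = 1 / (z - m) \<and> cmod m < 1)"

definition Gfun :: "real \<Rightarrow> complex \<Rightarrow> complex" where
  "Gfun u z = 2 * (complex_of_real u)^2 * msc z * deriv msc z /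
              (1 - (complex_of_real u)^2 * (msc z)^2)"

text \<open>The supremum over eta1, eta2 in (0,1] of the double integral
  (nonnegative integrand, so the Lebesgue nonnegative integral on R^2).\<close>
definition Ifun :: "(real \<Rightarrow>\<^sub>C real) \<Rightarrow> (real \<Rightarrow>\<^sub>C real) \<Rightarrow> real \<Rightarrow> ennreal" where
  "Ifun \<psi> \<phi> u = (SUP \<eta> \<in> {0<..1::real} \<times> {0<..1::real}.
      \<integral>\<^sup>+ p. ennreal (\<bar>\<psi> (fst p)\<bar> * \<bar>\<phi> (snd p)\<bar> *
         \<bar>Im (Gfun u (Complex (fst p) (fst \<eta>))) * Im (Gfun u (Complex (snd p) (snd \<eta>)))\<bar>)
      \<partial>(lborel :: (real \<times> real) measure))"

end

theory Submission
  imports Defs "HOL-Complex_Analysis.Complex_Analysis"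
begin


lemma msc_iff:
  assumes "Im z > 0"
  shows "(m = 1 / (z - m)) \<longleftrightarrow> m^2 - z*m + 1 = 0"
proof (cases "m = z")
  case True
  then show ?thesis using assms by (auto simp: power2_eq_square)
next
  case False
  then have "z - m \<noteq> 0" by simp
  then show ?thesis
    by (auto simp: field_simps power2_eq_square)
qed

lemma msc_ex:
  assumes "Im z > 0"
  shows "\<exists>m. m^2 - z*m + 1 = 0 \<and> cmod m < 1"
proof -
  define s where "s = csqrt (z^2 - 4)"
  define r1 where "r1 = (z - s)/2"
  define r2 where "r2 = (z + s)/2"
  have s2: "s^2 = z^2 - 4" unfolding s_def by simp
  have prod: "r1 * r2 = 1" unfolding r1_def r2_def
    using s2 by (simp add: field_simps power2_eq_square)
  have sum: "z = r1 + r2" unfolding r1_def r2_def by (simp add: field_simps)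
  have root1: "r1^2 - z*r1 + 1 = 0" using prod sum by (simp add: power2_eq_square algebra_simps)
  have root2: "r2^2 - z*r2 + 1 = 0" using prod sum by (simp add: power2_eq_square algebra_simps)
  show ?thesis
  proof (cases "cmod r1 < 1")
    case True then show ?thesis using root1 by blast
  next
    case n1: False
    show ?thesis
    proof (cases "cmod r2 < 1")
      case True then show ?thesis using root2 by blast
    next
      case n2: False
      have "cmod r1 * cmod r2 = 1" using prod by (metis norm_mult norm_one)
      then have c1: "cmod r1 = 1" using n1 n2
        by (metis linorder_not_le mult_le_cancel_left1 mult.commute less_le_not_le norm_ge_zero order_antisym_conv)
      have r1nz: "r1 \<noteq> 0" using prod by auto
      have "r2 = 1 / r1" using prod r1nz by (metis nonzero_mult_div_cancel_left div_by_1)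
      also have "\<dots> = cnj r1" using c1
        by (simp add: complex_div_cnj[of 1 r1])
      finally have "Im z = 0" using sum by simp
      then show ?thesis using assms by simp
    qed
  qed
qed

lemma msc_uniq:
  assumes "m1^2 - z*m1 + 1 = 0" "cmod m1 < 1" "m2^2 - z*m2 + 1 = 0" "cmod m2 < 1"
  shows "m1 = m2"
proof (rule ccontr)
  assume ne: "m1 \<noteq> m2"
  have "(m1 - m2) * (m1 + m2 - z) = 0" using assms(1,3) by algebra
  then have "z = m1 + m2" using ne by simp
  then have "m1 * m2 = 1" using assms(1) by (simp add: algebra_simps power2_eq_square)
  then have "cmod m1 * cmod m2 = 1" by (metis norm_mult norm_one)
  moreover have "cmod m1 * cmod m2 < 1"
    using assms(2,4) by (metis mult_strict_mono' mult_1 norm_ge_zero) 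
  ultimately show False by simp
qed

lemma msc_prop:
  assumes "Im z > 0"
  shows "(msc z)^2 - z * msc z + 1 = 0 \<and> cmod (msc z) < 1"
proof -
  obtain m where m: "m^2 - z*m + 1 = 0" "cmod m < 1" using msc_ex[OF assms] by blast
  have "msc z = m" unfolding msc_def
  proof (rule the_equality)
    show "m = 1 / (z - m) \<and> cmod m < 1" using m msc_iff[OF assms] by blast
    fix y assume "y = 1 / (z - y) \<and> cmod y < 1"
    then show "y = m" using msc_uniq[OF _ _ m] msc_iff[OF assms] by blast
  qed
  then show ?thesis using m by simp
qed

lemma msc_eqI:
  assumes "Im z > 0" "m^2 - z*m + 1 = 0" "cmod m < 1"
  shows "msc z = m"
  using msc_uniq[OF _ _ assms(2,3)] msc_prop[OF assms(1)] by blast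

lemma msc_basic:
  assumes "Im z > 0"
  defines "m \<equiv> msc z"
  shows "m \<noteq> 0" "z = m + 1/m" "Im m < 0" "cmod m < 1" "m^2 \<noteq> 1"
proof -
  have q: "m^2 - z*m + 1 = 0" and c: "cmod m < 1" using msc_prop[OF assms(1)] unfolding m_def by auto
  show nz: "m \<noteq> 0" using q by auto
  show zq: "z = m + 1/m" using q nz by (simp add: field_simps power2_eq_square)
  show "cmod m < 1" by fact
  obtain a b where ab: "m = Complex a b" by (cases m)
  have r: "a^2 + b^2 < 1" using c ab by (simp add: cmod_def)
  have r0: "a^2 + b^2 > 0" using nz ab
    by (metis Complex_eq_0 add_nonneg_nonneg linorder_neqE_linordered_idom not_less sum_power2_eq_zero_iff zero_le_power2)
  have "Im z = b - b / (a^2+b^2)" using zq ab by (simp add: Im_divide power2_eq_square)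
  also have "\<dots> = b * (a^2 + b^2 - 1) / (a^2+b^2)"
  proof -
    have "\<And>t. t \<noteq> 0 \<Longrightarrow> b - b / t = b * (t - 1) / t" by (simp add: field_simps)
    then show ?thesis using r0 by (metis add_diff_cancel_left' less_numeral_extra(3))
  qed
  finally have "b * (a^2 + b^2 - 1) / (a^2+b^2) > 0" using assms(1) by simp
  then have "b * (a^2 + b^2 - 1) > 0" using r0 by (simp add: zero_less_divide_iff)
  then show "Im m < 0" using ab r by (simp add: zero_less_mult_iff)
  show "m^2 \<noteq> 1"
  proof
    assume "m^2 = 1"
    then have "m = 1 \<or> m = -1" by (simp add: power2_eq_1_iff)
    then show False using zq assms(1) by auto
  qed
qed

lemma Im_plus_inv:
  fixes w :: complex
  assumes "cmod w < 1" "Im w < 0"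
  shows "Im (w + 1/w) > 0"
proof -
  obtain a b where ab: "w = Complex a b" by (cases w)
  have r: "a^2 + b^2 < 1" using assms ab by (simp add: cmod_def)
  have r0: "a^2 + b^2 > 0" using assms ab by (simp add: sum_power2_gt_zero_iff)
  have "Im (w + 1/w) = b - b / (a^2+b^2)" using ab by (simp add: Im_divide power2_eq_square)
  also have "\<dots> = b * (a^2 + b^2 - 1) / (a^2+b^2)"
  proof -
    have "\<And>t. t \<noteq> 0 \<Longrightarrow> b - b / t = b * (t - 1) / t" by (simp add: field_simps)
    then show ?thesis using r0 by (metis less_numeral_extra(3))
  qed
  finally show ?thesis using r r0 assms ab by (simp add: zero_less_mult_iff zero_less_divide_iff)
qed

lemma msc_deriv:
  assumes "Im y > 0"
  shows "(msc has_field_derivative ((msc y)^2 / ((msc y)^2 - 1))) (at y)"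
proof -
  define S where "S = {w::complex. cmod w < 1 \<and> Im w < 0}"
  define m where "m = msc y"
  note mb = msc_basic[OF assms, folded m_def]
  have openS: "open S" unfolding S_def
    by (intro open_Collect_conj open_Collect_less continuous_intros)
  have S0: "\<And>w. w \<in> S \<Longrightarrow> w \<noteq> 0" unfolding S_def by auto
  have cont: "continuous_on S (\<lambda>w. w + 1/w)"
    using S0 by (intro continuous_intros) auto
  have mS: "m \<in> S" using mb unfolding S_def by auto
  have fy: "m + 1/m = y" using mb by simp
  have inv: "msc (w + 1/w) = w" if "w \<in> S" for w
  proof (rule msc_eqI)
    show "0 < Im (w + 1 / w)" using that Im_plus_inv unfolding S_def by auto
    show "w\<^sup>2 - (w + 1 / w) * w + 1 = 0" using S0[OF that] by (simp add: field_simps power2_eq_square)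
    show "cmod w < 1" using that unfolding S_def by auto
  qed
  have d: "((\<lambda>w. w + 1/w) has_field_derivative (1 - 1/m^2)) (at m)"
    using mb(1) by (auto intro!: derivative_eq_intros simp: field_simps power2_eq_square)
  have nz: "1 - 1/m^2 \<noteq> 0" using mb(1,5) by (simp add: field_simps)
  have "(msc has_field_derivative inverse (1 - 1/m^2)) (at y)"
    apply (rule has_field_derivative_inverse_strong_x[where f="\<lambda>w. w + 1/w" and g=msc and S=S])
    using d nz openS cont mS fy inv by (simp_all add: m_def)
  moreover have "inverse (1 - 1/m^2) = m^2/(m^2-1)" using mb(1,5)
    by (simp add: field_simps)
  ultimately show ?thesis unfolding m_def by simp
qed

lemma deriv_msc:
  assumes "Im y > 0"
  shows "deriv msc y = (msc y)^2 / ((msc y)^2 - 1)"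
  using msc_deriv[OF assms] by (rule DERIV_imp_deriv)



lemma nn_lborel_le_intervals:
  fixes f :: "real \<Rightarrow> ennreal"
  assumes meas: "f \<in> borel_measurable borel"
    and bnd: "\<And>a b. a < b \<Longrightarrow> (\<integral>\<^sup>+x. f x * indicator {a..b} x \<partial>lborel) \<le> C"
  shows "(\<integral>\<^sup>+x. f x \<partial>lborel) \<le> C"
proof -
  define g where "g = (\<lambda>(n::nat) x. f x * indicator {-real n - 1..real n + 1} x)"
  have inc: "incseq g"
    unfolding g_def incseq_def le_fun_def
    by (auto intro!: mult_left_mono simp: indicator_def)
  have gm: "\<And>i. g i \<in> borel_measurable lborel" unfolding g_def using meas by measurable
  have fx: "f x = (SUP n. g n x)" for x
  proof (rule antisym)
    obtain n :: nat where n: "\<bar>x\<bar> \<le> real n" using real_arch_simple by blast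
    have "g n x = f x" unfolding g_def using n by (auto simp: indicator_def)
    then show "f x \<le> (SUP n. g n x)" by (metis SUP_upper UNIV_I)
  next
    show "(SUP n. g n x) \<le> f x" unfolding g_def
      by (rule SUP_least) (auto simp: indicator_def)
  qed
  have "(\<integral>\<^sup>+x. f x \<partial>lborel) = (\<integral>\<^sup>+x. (SUP n. g n x) \<partial>lborel)" using fx by simp
  also have "\<dots> = (SUP n. integral\<^sup>N lborel (g n))"
    by (rule nn_integral_monotone_convergence_SUP[OF inc gm])
  also have "\<dots> \<le> C"
    by (rule SUP_least) (unfold g_def, rule bnd, simp)
  finally show ?thesis .
qed

lemma TV_mono:
  fixes F F' :: "real \<Rightarrow> real"
  assumes der: "\<And>x. (F has_real_derivative F' x) (at x)"
    and cont: "continuous_on UNIV F'"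
    and bnd: "\<And>x. A \<le> F x" "\<And>x. F x \<le> B"
    and pos: "\<And>x. 0 \<le> F' x"
  shows "(\<integral>\<^sup>+x. ennreal \<bar>F' x\<bar> \<partial>lborel) \<le> ennreal (B - A)"
proof (rule nn_lborel_le_intervals)
  have [measurable]: "F' \<in> borel_measurable borel" using cont by (rule borel_measurable_continuous_onI)
  show "(\<lambda>x. ennreal \<bar>F' x\<bar>) \<in> borel_measurable borel" by measurable
  fix a b :: real assume ab: "a < b"
  have "(\<integral>\<^sup>+x. ennreal \<bar>F' x\<bar> * indicator {a..b} x \<partial>lborel) = (\<integral>\<^sup>+x. ennreal (F' x) * indicator {a..b} x \<partial>lborel)"
    using pos by simp
  also have "\<dots> = F b - F a"
    by (rule nn_integral_FTC_Icc) (use der pos ab in auto)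
  also have "\<dots> \<le> ennreal (B - A)" using bnd[of a] bnd[of b] by (intro ennreal_leI) auto
  finally show "(\<integral>\<^sup>+x. ennreal \<bar>F' x\<bar> * indicator {a..b} x \<partial>lborel) \<le> ennreal (B - A)" .
qed

lemma TV_unimodal:
  fixes F F' :: "real \<Rightarrow> real"
  assumes der: "\<And>x. (F has_real_derivative F' x) (at x)"
    and cont: "continuous_on UNIV F'"
    and bnd: "\<And>x. A \<le> F x" "\<And>x. F x \<le> B"
    and uni: "\<And>x y. x < y \<Longrightarrow> F' y > 0 \<Longrightarrow> F' x \<ge> 0"
  shows "(\<integral>\<^sup>+x. ennreal \<bar>F' x\<bar> \<partial>lborel) \<le> ennreal (2 * (B - A))"
proof (rule nn_lborel_le_intervals)
  have [measurable]: "F' \<in> borel_measurable borel" using cont by (rule borel_measurable_continuous_onI)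
  show "(\<lambda>x. ennreal \<bar>F' x\<bar>) \<in> borel_measurable borel" by measurable
  have AB: "A \<le> B" using bnd[of 0] by linarith
  fix a b :: real assume ab: "a < b"
  define S where "S = {y \<in> {a..b}. F' y < 0} \<union> {b}"
  define c where "c = Inf S"
  have bddS: "bdd_below S" unfolding S_def by (auto intro: bdd_belowI[of _ a])
  have cb: "c \<le> b" unfolding c_def by (rule cInf_lower) (auto simp: S_def bddS)
  have ac: "a \<le> c" unfolding c_def by (rule cInf_greatest) (use ab in \<open>auto simp: S_def\<close>)
  have L: "F' x \<ge> 0" if "x \<in> {a..<c}" for x
  proof (rule ccontr)
    assume "\<not> F' x \<ge> 0"
    then have "x \<in> S" using that cb unfolding S_def by auto
    then have "c \<le> x" unfolding c_def by (rule cInf_lower[OF _ bddS])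
    then show False using that by auto
  qed
  have R: "F' y \<le> 0" if "y \<in> {c<..b}" for y
  proof -
    have "Inf S < y" using that c_def by auto
    then obtain s where s: "s \<in> S" "s < y" using cInf_less_iff[OF _ bddS] S_def by auto
    then have "F' s < 0" using that unfolding S_def by auto
    then show ?thesis using uni[OF s(2)] by force
  qed
  have clP: "closed {x. 0 \<le> F' x}"
    using cont by (intro closed_Collect_le continuous_intros) (auto simp: continuous_on_subset)
  have clN: "closed {x. F' x \<le> 0}"
    using cont by (intro closed_Collect_le continuous_intros) (auto simp: continuous_on_subset)
  have LI: "F' x \<ge> 0" if "a < c" "x \<in> {a..c}" for x
  proof -
    have "closure {a..<c} \<subseteq> {x. 0 \<le> F' x}" using L by (intro closure_minimal clP) auto
    then show ?thesis using that by auto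
  qed
  have RI: "F' x \<le> 0" if "c < b" "x \<in> {c..b}" for x
  proof -
    have "closure {c<..b} \<subseteq> {x. F' x \<le> 0}" using R by (intro closure_minimal clN) auto
    then show ?thesis using that by auto
  qed
  have intL: "(\<integral>\<^sup>+x. ennreal \<bar>F' x\<bar> * indicator {a..c} x \<partial>lborel) \<le> ennreal (B - A)" if "a < c"
  proof -
    have "(\<integral>\<^sup>+x. ennreal \<bar>F' x\<bar> * indicator {a..c} x \<partial>lborel) = (\<integral>\<^sup>+x. ennreal (F' x) * indicator {a..c} x \<partial>lborel)"
      using LI[OF that] by (intro nn_integral_cong) (auto simp: indicator_def)
    also have "\<dots> = F c - F a"
      by (rule nn_integral_FTC_Icc) (use der LI that in auto)
    also have "\<dots> \<le> ennreal (B - A)" using bnd[of a] bnd[of c] by (intro ennreal_leI) auto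
    finally show ?thesis .
  qed
  have intR: "(\<integral>\<^sup>+x. ennreal \<bar>F' x\<bar> * indicator {c..b} x \<partial>lborel) \<le> ennreal (B - A)" if "c < b"
  proof -
    have "(\<integral>\<^sup>+x. ennreal \<bar>F' x\<bar> * indicator {c..b} x \<partial>lborel) = (\<integral>\<^sup>+x. ennreal (- F' x) * indicator {c..b} x \<partial>lborel)"
      using RI[OF that] by (intro nn_integral_cong) (auto simp: indicator_def)
    also have "\<dots> = (- F b) - (- F c)"
      by (rule nn_integral_FTC_Icc) (use der RI that in \<open>auto intro!: derivative_eq_intros\<close>)
    also have "\<dots> \<le> ennreal (B - A)" using bnd[of b] bnd[of c] by (intro ennreal_leI) auto
    finally show ?thesis .
  qed
  have split: "(\<integral>\<^sup>+x. ennreal \<bar>F' x\<bar> * indicator {a..b} x \<partial>lborel)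
      \<le> (\<integral>\<^sup>+x. ennreal \<bar>F' x\<bar> * indicator {a..c} x \<partial>lborel) + (\<integral>\<^sup>+x. ennreal \<bar>F' x\<bar> * indicator {c..b} x \<partial>lborel)"
  proof -
    have "(\<integral>\<^sup>+x. ennreal \<bar>F' x\<bar> * indicator {a..b} x \<partial>lborel)
        \<le> (\<integral>\<^sup>+x. ennreal \<bar>F' x\<bar> * indicator {a..c} x + ennreal \<bar>F' x\<bar> * indicator {c..b} x \<partial>lborel)"
      by (intro nn_integral_mono) (auto simp: indicator_def)
    also have "\<dots> = (\<integral>\<^sup>+x. ennreal \<bar>F' x\<bar> * indicator {a..c} x \<partial>lborel) + (\<integral>\<^sup>+x. ennreal \<bar>F' x\<bar> * indicator {c..b} x \<partial>lborel)"
      by (rule nn_integral_add) auto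
    finally show ?thesis .
  qed
  have z: "(\<integral>\<^sup>+x. ennreal \<bar>F' x\<bar> * indicator {c..c} x \<partial>lborel) = 0"
  proof -
    have "AE x in lborel. x \<noteq> c" by (rule AE_lborel_singleton)
    then have "AE x in lborel. ennreal \<bar>F' x\<bar> * indicator {c..c} x = 0" by eventually_elim auto
    then show ?thesis by (simp add: nn_integral_0_iff_AE)
  qed
  have twice: "ennreal (B - A) + ennreal (B - A) = ennreal (2 * (B - A))"
    using AB by (simp add: ennreal_plus[symmetric])
  show "(\<integral>\<^sup>+x. ennreal \<bar>F' x\<bar> * indicator {a..b} x \<partial>lborel) \<le> ennreal (2 * (B - A))"
  proof (cases "a < c")
    case True
    note l = intL[OF True]
    show ?thesis
    proof (cases "c < b")
      case True
      have "(\<integral>\<^sup>+x. ennreal \<bar>F' x\<bar> * indicator {a..b} x \<partial>lborel) \<le> ennreal (B - A) + ennreal (B - A)"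
        using split l intR[OF True] by (meson add_mono order_trans)
      then show ?thesis using twice by simp
    next
      case False
      then have "c = b" using cb by simp
      then have "(\<integral>\<^sup>+x. ennreal \<bar>F' x\<bar> * indicator {a..b} x \<partial>lborel) \<le> ennreal (B - A)"
        using split l z by simp
      also have "\<dots> \<le> ennreal (2 * (B - A))" using AB by (intro ennreal_leI) auto
      finally show ?thesis .
    qed
  next
    case False
    then have "c = a" using ac by simp
    then have "c < b" using ab by simp
    have "(\<integral>\<^sup>+x. ennreal \<bar>F' x\<bar> * indicator {a..b} x \<partial>lborel) \<le> ennreal (B - A)"
      using split intR[OF \<open>c < b\<close>] z \<open>c = a\<close> by simp
    also have "\<dots> \<le> ennreal (2 * (B - A))" using AB by (intro ennreal_leI) auto
    finally show ?thesis .
  qed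
qed



lemma Im_div_cnj: "Im (w / v) = Im (w * cnj v) / (cmod v)^2"
  by (simp add: complex_div_cnj[of w v] Im_divide_of_real del: complex_cnj_mult)
lemma Re_div_cnj: "Re (w / v) = Re (w * cnj v) / (cmod v)^2"
  by (simp add: complex_div_cnj[of w v] Re_divide_of_real del: complex_cnj_mult)

lemma I1: "Im (Complex a b * cnj ((Complex a b)^2 - 1)) = - b * (a^2+b^2+1)"
  by (simp add: power2_eq_square algebra_simps)
lemma I2: "Re (Complex a b * cnj ((Complex a b)^2 - 1)) = a * (a^2+b^2-1)"
  by (simp add: power2_eq_square algebra_simps)
lemma I5: "Im (- c * (Complex a b)^2 * cnj (((Complex a b)^2 - 1) * (1 - c * Complex a b)))
   = - c * b * (c * (a^2+b^2) * (1 + a^2+b^2) - 2*a)"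
  by (simp add: power2_eq_square algebra_simps)
lemma I4: "Re ((Complex a b)^2 * cnj ((Complex a b)^2 - 1)) = (a^2+b^2)^2 - (a^2 - b^2)"
  by (simp add: power2_eq_square algebra_simps)
lemma I4b: "(cmod ((Complex a b)^2 - 1))^2 = (a^2+b^2)^2 - 2*(a^2 - b^2) + 1"
  unfolding cmod_power2 by (simp add: power2_eq_square algebra_simps)

lemma line_vd:
  assumes "(h has_field_derivative h') (at (Complex E \<eta>))"
  shows "((\<lambda>t. h (Complex t \<eta>)) has_vector_derivative h') (at E)"
proof -
  have e: "\<And>t. Complex t \<eta> = of_real t + \<i> * of_real \<eta>" by (simp add: complex_eq_iff)
  have "((\<lambda>w. h (w + \<i> * of_real \<eta>)) has_field_derivative h' * 1) (at (of_real E))"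
    by (rule DERIV_chain2[where f=h]) (use assms e in \<open>auto intro!: derivative_eq_intros\<close>)
  then have "((\<lambda>x. h (of_real x + \<i> * of_real \<eta>)) has_vector_derivative h') (at E)"
    using has_vector_derivative_real_field by fastforce
  then show ?thesis by (simp only: e)
qed

lemma line_Im:
  assumes "(h has_field_derivative h') (at (Complex E \<eta>))"
  shows "((\<lambda>t. Im (h (Complex t \<eta>))) has_real_derivative Im h') (at E)"
  using line_vd[OF assms] by (simp add: has_vector_derivative_complex_iff)

lemma line_Re:
  assumes "(h has_field_derivative h') (at (Complex E \<eta>))"
  shows "((\<lambda>t. Re (h (Complex t \<eta>))) has_real_derivative Re h') (at E)"
  using line_vd[OF assms] by (simp add: has_vector_derivative_complex_iff)

lemma line_facts:
  fixes E :: real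
  assumes "\<eta> > 0"
  defines "m \<equiv> msc (Complex E \<eta>)"
  shows "Im m < 0" "(Re m)^2 + (Im m)^2 < 1" "(Re m)^2 + (Im m)^2 > 0"
    "E = Re m + Re m / ((Re m)^2 + (Im m)^2)" "m^2 \<noteq> 1" "m \<noteq> 0" "cmod m < 1"
proof -
  have Imz: "Im (Complex E \<eta>) > 0" using assms by simp
  note mb = msc_basic[OF Imz, folded m_def]
  show "Im m < 0" "m^2 \<noteq> 1" "m \<noteq> 0" "cmod m < 1" using mb by auto
  show "(Re m)^2 + (Im m)^2 < 1" using mb(4) by (simp add: cmod_def)
  show "(Re m)^2 + (Im m)^2 > 0" using mb(1) by (simp add: sum_power2_gt_zero_iff complex_eq_iff)
  have "E = Re (m + 1/m)" using mb(2) by (metis complex.sel(1))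
  then show "E = Re m + Re m / ((Re m)^2 + (Im m)^2)" by (simp add: Re_divide power2_eq_square)
qed

lemma line_sign:
  assumes "\<eta> > 0"
  shows "E \<ge> 0 \<longleftrightarrow> Re (msc (Complex E \<eta>)) \<ge> 0"
    and "E - Re (msc (Complex E \<eta>)) = Re (msc (Complex E \<eta>)) / ((Re (msc (Complex E \<eta>)))^2 + (Im (msc (Complex E \<eta>)))^2)"
proof -
  note lf = line_facts[OF assms, of E]
  define a where "a = Re (msc (Complex E \<eta>))"
  define r where "r = (Re (msc (Complex E \<eta>)))^2 + (Im (msc (Complex E \<eta>)))^2"
  have r: "r > 0" using lf unfolding r_def by auto
  have e: "E = a + a / r" using lf unfolding a_def r_def by auto
  have "E = a * (1 + 1/r)" using e by (simp add: field_simps)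
  moreover have "1 + 1/r > 0" using r by (simp add: add_pos_pos)
  ultimately show "E \<ge> 0 \<longleftrightarrow> Re (msc (Complex E \<eta>)) \<ge> 0" unfolding a_def[symmetric]
    by (simp add: zero_le_mult_iff)
  show "E - Re (msc (Complex E \<eta>)) = Re (msc (Complex E \<eta>)) / ((Re (msc (Complex E \<eta>)))^2 + (Im (msc (Complex E \<eta>)))^2)"
    using e unfolding a_def r_def by simp
qed


lemma alg_facts:
  fixes m :: complex
  assumes b: "Im m < 0" and r1: "(Re m)^2 + (Im m)^2 < 1" and m1: "m^2 \<noteq> 1"
  defines "Md \<equiv> m^2 / (m^2 - 1)"
  defines "\<rho> \<equiv> (Re m)^2 + (Im m)^2"
  shows "Im (Md / m) > 0"
    and "Re m \<ge> 0 \<Longrightarrow> Re m * Re Md + Im m * Im Md \<le> 0"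
    and "Re m \<le> 0 \<Longrightarrow> Re m * Re Md + Im m * Im Md \<ge> 0"
    and "Re m * Re Md + Im m * Im Md = \<rho> * Re (Md / m)"
    and "Re Md < 1"
    and "cmod (Md / m) \<le> \<bar>Re (Md / m)\<bar> + Im (Md / m)"
proof -
  obtain a bb where ab: "m = Complex a bb" by (cases m)
  have m0: "m \<noteq> 0" using b by auto
  have D: "(cmod (m^2 - 1))^2 > 0" using m1 by simp
  have m1': "m^2 - 1 \<noteq> 0" using m1 by simp
  have q: "Md / m = m / (m^2 - 1)" unfolding Md_def using m0 m1'
    by (simp add: divide_divide_eq_left power2_eq_square)
  have ImQ: "Im (Md / m) = - Im m * (\<rho> + 1) / (cmod (m^2 - 1))^2"
    unfolding q Im_div_cnj using I1[of a bb] ab \<rho>_def by simp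
  have ReQ: "Re (Md / m) = Re m * (\<rho> - 1) / (cmod (m^2 - 1))^2"
    unfolding q Re_div_cnj using I2[of a bb] ab \<rho>_def by simp
  have r0: "\<rho> \<ge> 0" unfolding \<rho>_def by simp
  show "Im (Md / m) > 0" unfolding ImQ using b D r0
    by (intro divide_pos_pos mult_pos_pos) auto
  have key: "Re m * Re Md + Im m * Im Md = Re (cnj m * Md)" by simp
  also have "cnj m * Md = complex_of_real \<rho> * (Md / m)"
  proof -
    have mc: "m * cnj m = complex_of_real \<rho>" unfolding \<rho>_def by (simp add: complex_mult_cnj)
    have "complex_of_real \<rho> * (Md / m) = (m * cnj m) * Md / m" by (simp add: mc)
    also have "\<dots> = cnj m * Md" using m0 by simp
    finally show ?thesis by simp
  qed
  finally have X: "Re m * Re Md + Im m * Im Md = Re (complex_of_real \<rho> * (Md / m))" .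
  have ReofR: "\<And>r w. Re (complex_of_real r * w) = r * Re w" by simp
  from X show P: "Re m * Re Md + Im m * Im Md = \<rho> * Re (Md / m)" by (simp only: ReofR)
  have rl: "\<rho> < 1" using r1 \<rho>_def by simp
  show "Re m \<ge> 0 \<Longrightarrow> Re m * Re Md + Im m * Im Md \<le> 0"
    unfolding P ReQ using D r0 rl
    by (intro mult_nonneg_nonpos divide_nonpos_pos mult_nonneg_nonpos) auto
  show "Re m \<le> 0 \<Longrightarrow> Re m * Re Md + Im m * Im Md \<ge> 0"
    unfolding P ReQ using D r0 rl
    by (intro mult_nonneg_nonneg divide_nonneg_pos mult_nonpos_nonpos) auto
  have "Re Md = (\<rho>^2 - ((Re m)^2 - (Im m)^2)) / (cmod (m^2 - 1))^2"
    unfolding Md_def Re_div_cnj using I4[of a bb] ab \<rho>_def by simp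
  moreover have "(cmod (m^2 - 1))^2 = \<rho>^2 - 2*((Re m)^2 - (Im m)^2) + 1"
    using I4b[of a bb] ab \<rho>_def by simp
  moreover have "(Re m)^2 - (Im m)^2 < 1" using r1 by (smt (verit) zero_le_power2)
  ultimately show "Re Md < 1" using D by (simp add: divide_less_eq)
  show "cmod (Md / m) \<le> \<bar>Re (Md / m)\<bar> + Im (Md / m)"
    using cmod_le[of "Md / m"] \<open>Im (Md / m) > 0\<close> by simp
qed

lemma alg_Fc:
  fixes m :: complex and c :: real
  assumes m1: "m^2 \<noteq> 1" and nz: "1 - c * m \<noteq> 0"
  shows "Im (- c * (m^2 / (m^2 - 1)) / (1 - c * m)) = - c * Im m * (c * ((Re m)^2 + (Im m)^2) * (1 + ((Re m)^2 + (Im m)^2)) - 2 * Re m) / ((cmod (m^2 - 1))^2 * (cmod (1 - c * m))^2)"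
proof -
  obtain a bb where ab: "m = Complex a bb" by (cases m)
  have "- c * (m^2 / (m^2 - 1)) / (1 - c * m) = (- c * m^2) / ((m^2 - 1) * (1 - c * m))"
    using m1 nz by (simp add: field_simps)
  then have "Im (- c * (m^2 / (m^2 - 1)) / (1 - c * m)) = Im ((- c * m^2) / ((m^2 - 1) * (1 - c * m)))"
    by (rule arg_cong[where f=Im])
  also have "\<dots> = Im (- c * m^2 * cnj ((m^2 - 1) * (1 - c * m))) / (cmod ((m^2 - 1) * (1 - c * m)))^2"
    by (rule Im_div_cnj)
  also have "\<dots> = - c * Im m * (c * ((Re m)^2 + (Im m)^2) * (1 + ((Re m)^2 + (Im m)^2)) - 2 * Re m) / ((cmod (m^2 - 1))^2 * (cmod (1 - c * m))^2)"
    using I5[of c a bb] ab by (simp add: norm_mult power_mult_distrib)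
  finally show ?thesis .
qed


lemma msc_line_vd:
  assumes "\<eta> > 0"
  shows "((\<lambda>t. msc (Complex t \<eta>)) has_vector_derivative
           ((msc (Complex E \<eta>))^2 / ((msc (Complex E \<eta>))^2 - 1))) (at E)"
  by (rule line_vd, rule msc_deriv) (use assms in simp)

lemma msc_line_cont:
  assumes "\<eta> > 0"
  shows "continuous_on UNIV (\<lambda>t. msc (Complex t \<eta>))"
  by (rule continuous_at_imp_continuous_on)
     (use has_vector_derivative_continuous[OF msc_line_vd[OF assms]] in blast)

lemma Fc_deriv:
  fixes E :: real
  assumes "\<eta> > 0" "c \<noteq> 0"
  defines "m \<equiv> msc (Complex E \<eta>)"
  shows "((\<lambda>t. Im (Ln (1 - of_real c * msc (Complex t \<eta>)))) has_real_derivative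
           Im (- of_real c * (m^2 / (m^2 - 1)) / (1 - of_real c * m))) (at E)"
proof -
  have Imz: "Im (Complex E \<eta>) > 0" using assms by simp
  note lf = line_facts[OF assms(1), of E, folded m_def]
  have nR: "1 - of_real c * m \<notin> \<real>\<^sub>\<le>\<^sub>0"
    using lf(1) assms(2) by (auto simp: complex_nonpos_Reals_iff)
  have d1: "((\<lambda>z. 1 - of_real c * msc z) has_field_derivative (- of_real c * (m^2 / (m^2 - 1)))) (at (Complex E \<eta>))"
    using msc_deriv[OF Imz] unfolding m_def by (auto intro!: derivative_eq_intros)
  have "((\<lambda>z. Ln (1 - of_real c * msc z)) has_field_derivative inverse (1 - of_real c * m) * (- of_real c * (m^2 / (m^2 - 1)))) (at (Complex E \<eta>))"
    using DERIV_chain2[OF has_field_derivative_Ln[OF nR[unfolded m_def]] d1] unfolding m_def by simp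
  from line_Im[OF this] show ?thesis by (simp add: field_simps)
qed

lemma rho_deriv:
  fixes E :: real
  assumes "\<eta> > 0"
  defines "m \<equiv> msc (Complex E \<eta>)"
  shows "((\<lambda>t. (Re (msc (Complex t \<eta>)))^2 + (Im (msc (Complex t \<eta>)))^2) has_real_derivative
           2 * (Re m * Re (m^2 / (m^2 - 1)) + Im m * Im (m^2 / (m^2 - 1)))) (at E)"
proof -
  have Imz: "Im (Complex E \<eta>) > 0" using assms by simp
  have dR: "((\<lambda>t. Re (msc (Complex t \<eta>))) has_real_derivative Re (m^2 / (m^2 - 1))) (at E)"
    unfolding m_def by (rule line_Re[OF msc_deriv[OF Imz]])
  have dI: "((\<lambda>t. Im (msc (Complex t \<eta>))) has_real_derivative Im (m^2 / (m^2 - 1))) (at E)"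
    unfolding m_def by (rule line_Im[OF msc_deriv[OF Imz]])
  have "((\<lambda>t. Re (msc (Complex t \<eta>)) * Re (msc (Complex t \<eta>)) + Im (msc (Complex t \<eta>)) * Im (msc (Complex t \<eta>))) has_real_derivative
     (Re (m^2 / (m^2 - 1)) * Re m + Re (m^2 / (m^2 - 1)) * Re m + (Im (m^2 / (m^2 - 1)) * Im m + Im (m^2 / (m^2 - 1)) * Im m))) (at E)"
    using DERIV_add[OF DERIV_mult[OF dR dR] DERIV_mult[OF dI dI]] unfolding m_def by simp
  then show ?thesis by (simp add: power2_eq_square algebra_simps)
qed

lemma Re_deriv:
  fixes E :: real
  assumes "\<eta> > 0"
  defines "m \<equiv> msc (Complex E \<eta>)"
  shows "((\<lambda>t. Re (msc (Complex t \<eta>))) has_real_derivative Re (m^2 / (m^2 - 1))) (at E)"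
proof -
  have Imz: "Im (Complex E \<eta>) > 0" using assms by simp
  show ?thesis unfolding m_def by (rule line_Re[OF msc_deriv[OF Imz]])
qed

lemma LnM_deriv:
  fixes E :: real
  assumes "\<eta> > 0"
  defines "m \<equiv> msc (Complex E \<eta>)"
  shows "((\<lambda>t. Im (Ln (msc (Complex t \<eta>)))) has_real_derivative Im ((m^2 / (m^2 - 1)) / m)) (at E)"
proof -
  have Imz: "Im (Complex E \<eta>) > 0" using assms by simp
  note lf = line_facts[OF assms(1), of E, folded m_def]
  have nR: "m \<notin> \<real>\<^sub>\<le>\<^sub>0" using lf(1) by (auto simp: complex_nonpos_Reals_iff)
  have "((\<lambda>z. Ln (msc z)) has_field_derivative inverse m * (m^2 / (m^2 - 1))) (at (Complex E \<eta>))"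
    using DERIV_chain2[OF has_field_derivative_Ln[OF nR[unfolded m_def]] msc_deriv[OF Imz]] unfolding m_def by simp
  from line_Im[OF this] show ?thesis by (simp add: field_simps)
qed



lemma split_id:
  fixes x m q :: complex
  assumes "1 - x*m \<noteq> 0" "1 + x*m \<noteq> 0"
  shows "2*x^2*m*q/(1 - x^2*m^2) = x*q/(1-x*m) - x*q/(1+x*m)"
proof -
  have f: "1 - x^2*m^2 = (1-x*m)*(1+x*m)" by (simp add: algebra_simps power2_eq_square)
  show ?thesis unfolding f using assms by (simp add: field_simps power2_eq_square)
qed

lemma Gfun_split:
  fixes E :: real
  assumes "\<eta> > 0" "u > 0"
  defines "m \<equiv> msc (Complex E \<eta>)"
  shows "Im (Gfun u (Complex E \<eta>)) =
     - Im (- of_real u * (m^2 / (m^2 - 1)) / (1 - of_real u * m))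
     - Im (- of_real (-u) * (m^2 / (m^2 - 1)) / (1 - of_real (-u) * m))"
proof -
  have Imz: "Im (Complex E \<eta>) > 0" using assms by simp
  note lf = line_facts[OF assms(1), of E, folded m_def]
  have n1: "1 - of_real u * m \<noteq> 0"
  proof
    assume "1 - of_real u * m = 0"
    then have "Im (1 - of_real u * m) = 0" by simp
    then show False using lf(1) assms(2) by simp
  qed
  have n2: "1 + of_real u * m \<noteq> 0"
  proof
    assume "1 + of_real u * m = 0"
    then have "Im (1 + of_real u * m) = 0" by simp
    then show False using lf(1) assms(2) by simp
  qed
  have n3: "1 - (of_real u)^2 * m^2 \<noteq> 0"
    using n1 n2 by (metis (no_types, lifting) mult_eq_0_iff power_mult_distrib square_diff_square_factored power_one one_power2 power2_eq_square)
  have "Gfun u (Complex E \<eta>) = 2 * (of_real u)^2 * m * (m^2 / (m^2 - 1)) / (1 - (of_real u)^2 * m^2)"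
    unfolding Gfun_def deriv_msc[OF Imz] m_def by simp
  also have "\<dots> = of_real u * (m^2 / (m^2 - 1)) / (1 - of_real u * m) - of_real u * (m^2 / (m^2 - 1)) / (1 + of_real u * m)"
    by (rule split_id[OF n1 n2])
  finally show ?thesis by simp
qed


lemma Im_Ln_neg:
  assumes "Im z < 0"
  shows "- pi \<le> Im (Ln z) \<and> Im (Ln z) \<le> 0"
proof -
  have z: "z \<noteq> 0" using assms by auto
  have "\<not> (0 \<le> Im (Ln z) \<and> Im (Ln z) \<le> pi)" using Im_Ln_pos_le[OF z] assms by simp
  then show ?thesis using mpi_less_Im_Ln[OF z] Im_Ln_le_pi[OF z] by auto
qed

lemma bound_big:
  assumes eta: "\<eta> > 0" and u: "u > 0"
  shows "(\<integral>\<^sup>+E. ennreal \<bar>Im (Gfun u (Complex E \<eta>))\<bar> \<partial>lborel) \<le> ennreal (4*pi)"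
proof -
  define M where "M = (\<lambda>t. msc (Complex t \<eta>))"
  define Md where "Md = (\<lambda>t. (M t)^2/((M t)^2 - 1))"
  define F1 where "F1 = (\<lambda>t. Im (Ln (1 - of_real u * M t)))"
  define F1' where "F1' = (\<lambda>t. Im (- of_real u * Md t / (1 - of_real u * M t)))"
  define F2 where "F2 = (\<lambda>t. - Im (Ln (1 - of_real (-u) * M t)))"
  define F2' where "F2' = (\<lambda>t. - Im (- of_real (-u) * Md t / (1 - of_real (-u) * M t)))"
  define \<rho> where "\<rho> = (\<lambda>t. (Re (M t))^2 + (Im (M t))^2)"
  define \<rho>' where "\<rho>' = (\<lambda>t. 2 * (Re (M t) * Re (Md t) + Im (M t) * Im (Md t)))"
  define k1 where "k1 = (\<lambda>t. u * (1 + \<rho> t) - 2 * (t - Re (M t)))"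
  define k2 where "k2 = (\<lambda>t. u * (1 + \<rho> t) + 2 * (t - Re (M t)))"
  have lf: "Im (M t) < 0" "\<rho> t < 1" "\<rho> t > 0" "(M t)^2 \<noteq> 1" "M t \<noteq> 0" for t
    using line_facts[OF eta, of t] unfolding M_def \<rho>_def by auto
  have sgn: "t \<ge> 0 \<longleftrightarrow> Re (M t) \<ge> 0" for t using line_sign(1)[OF eta] unfolding M_def by auto
  have tma: "t - Re (M t) = Re (M t) / \<rho> t" for t using line_sign(2)[OF eta] unfolding M_def \<rho>_def by auto
  have n1: "1 - of_real u * M t \<noteq> 0" for t
  proof
    assume "1 - of_real u * M t = 0"
    then have "Im (1 - of_real u * M t) = 0" by simp
    then show False using lf(1)[of t] u by simp
  qed
  have n2: "1 - of_real (-u) * M t \<noteq> 0" for t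
  proof
    assume "1 - of_real (-u) * M t = 0"
    then have "Im (1 - of_real (-u) * M t) = 0" by simp
    then show False using lf(1)[of t] u by simp
  qed
  have af: "Re (M t) \<ge> 0 \<Longrightarrow> Re (M t) * Re (Md t) + Im (M t) * Im (Md t) \<le> 0"
     "Re (M t) \<le> 0 \<Longrightarrow> Re (M t) * Re (Md t) + Im (M t) * Im (Md t) \<ge> 0"
     "Re (Md t) < 1" for t
    using alg_facts[OF lf(1)[of t] _ lf(4)[of t]] lf(2)[of t] unfolding Md_def \<rho>_def by auto
  have dF1: "(F1 has_real_derivative F1' t) (at t)" for t
    using Fc_deriv[OF eta, of u t] u unfolding F1_def F1'_def Md_def M_def by simp
  have dF2: "(F2 has_real_derivative F2' t) (at t)" for t
    using DERIV_minus[OF Fc_deriv[OF eta, of "-u" t]] u unfolding F2_def F2'_def Md_def M_def by simp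
  have drho: "(\<rho> has_real_derivative \<rho>' t) (at t)" for t
    using rho_deriv[OF eta, of t] unfolding \<rho>_def \<rho>'_def Md_def M_def by simp
  have dRe: "((\<lambda>t. Re (M t)) has_real_derivative Re (Md t)) (at t)" for t
    using Re_deriv[OF eta, of t] unfolding Md_def M_def by simp
  have dk1: "(k1 has_real_derivative (u * (0 + \<rho>' t) - 2 * (1 - Re (Md t)))) (at t)" for t
    unfolding k1_def by (intro DERIV_diff DERIV_cmult DERIV_add DERIV_const DERIV_ident drho dRe)
  have dk2: "(k2 has_real_derivative (u * (0 + \<rho>' t) + 2 * (1 - Re (Md t)))) (at t)" for t
    unfolding k2_def by (intro DERIV_diff DERIV_cmult DERIV_add DERIV_const DERIV_ident drho dRe)
  have F1'k: "\<exists>P>0. F1' t = P * k1 t" for t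
  proof -
    define D where "D = (cmod ((M t)^2 - 1))^2 * (cmod (1 - of_real u * M t))^2"
    have D: "D > 0" unfolding D_def using lf(4)[of t] n1[of t] by simp
    have "F1' t = - u * Im (M t) * (u * \<rho> t * (1 + \<rho> t) - 2 * Re (M t)) / D"
      using alg_Fc[OF lf(4)[of t] n1[of t]] unfolding F1'_def Md_def \<rho>_def D_def by simp
    also have "u * \<rho> t * (1 + \<rho> t) - 2 * Re (M t) = \<rho> t * k1 t"
      unfolding k1_def tma using lf(3)[of t] by (simp add: field_simps)
    finally have "F1' t = (- u * Im (M t) * \<rho> t / D) * k1 t" by simp
    moreover have "- u * Im (M t) * \<rho> t / D > 0" using u lf(1,3)[of t] D
      by (intro divide_pos_pos mult_pos_pos mult_neg_neg) auto
    ultimately show ?thesis by blast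
  qed
  have F2'k: "\<exists>P>0. F2' t = - P * k2 t" for t
  proof -
    define D where "D = (cmod ((M t)^2 - 1))^2 * (cmod (1 - of_real (-u) * M t))^2"
    have D: "D > 0" unfolding D_def using lf(4)[of t] n2[of t] by simp
    have "F2' t = - (- (-u) * Im (M t) * ((-u) * \<rho> t * (1 + \<rho> t) - 2 * Re (M t)) / D)"
      using alg_Fc[OF lf(4)[of t] n2[of t]] unfolding F2'_def Md_def \<rho>_def D_def by simp
    also have "(-u) * \<rho> t * (1 + \<rho> t) - 2 * Re (M t) = - (\<rho> t * k2 t)"
      unfolding k2_def tma using lf(3)[of t] by (simp add: field_simps)
    finally have e: "F2' t = - ((- u * Im (M t) * \<rho> t / D) * k2 t)" by simp
    have "- u * Im (M t) * \<rho> t / D > 0" using u lf(1,3)[of t] D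
      by (intro divide_pos_pos mult_pos_pos mult_neg_neg) auto
    then show ?thesis using e by (intro exI[of _ "- u * Im (M t) * \<rho> t / D"]) (simp only: mult_minus_left)
  qed
  have k1pos: "k1 t > 0" if "t \<le> 0" for t
  proof -
    have "Re (M t) \<le> 0"
    proof (rule ccontr)
      assume "\<not> Re (M t) \<le> 0"
      then have "Re (M t) > 0" by simp
      moreover then have "Re (M t) / \<rho> t > 0" using lf(3)[of t] by simp
      ultimately have "t > 0" using tma[of t] by linarith
      then show False using that by simp
    qed
    then have "t - Re (M t) \<le> 0" unfolding tma using lf(3)[of t] by (simp add: divide_nonpos_pos)
    then show ?thesis unfolding k1_def using u lf(3)[of t] by (smt (verit) mult_pos_pos)
  qed
  have k2pos: "k2 t > 0" if "t \<ge> 0" for t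
  proof -
    have "Re (M t) \<ge> 0" using sgn[of t] that by auto
    then have "t - Re (M t) \<ge> 0" unfolding tma using lf(3)[of t] by simp
    then show ?thesis unfolding k2_def using u lf(3)[of t] by (smt (verit) mult_pos_pos)
  qed
  have uni1: "F1' x \<ge> 0" if xy: "x < y" and Fy: "F1' y > 0" for x y
  proof -
    obtain P where P: "P > 0" "F1' y = P * k1 y" using F1'k by blast
    have ky: "k1 y > 0" using Fy P by (simp add: zero_less_mult_iff)
    have kx: "k1 x > 0"
    proof (cases "x \<le> 0")
      case True then show ?thesis by (rule k1pos)
    next
      case False
      have "k1 x > k1 y"
      proof (rule DERIV_neg_imp_decreasing[OF xy])
        fix z assume z: "x \<le> z" "z \<le> y"
        then have "Re (M z) \<ge> 0" using sgn[of z] False by auto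
        then have "\<rho>' z \<le> 0" unfolding \<rho>'_def using af(1)[of z] by simp
        then have "u * (0 + \<rho>' z) - 2 * (1 - Re (Md z)) < 0" using af(3)[of z] u
          by (smt (verit) mult_nonneg_nonpos)
        then show "\<exists>D. (k1 has_real_derivative D) (at z) \<and> D < 0" using dk1 by blast
      qed
      then show ?thesis using ky by simp
    qed
    obtain Q where "Q > 0" "F1' x = Q * k1 x" using F1'k by blast
    then show ?thesis using kx by simp
  qed
  have uni2: "F2' x \<ge> 0" if xy: "x < y" and Fy: "F2' y > 0" for x y
  proof -
    obtain P where P: "P > 0" "F2' y = - P * k2 y" using F2'k by blast
    have ky: "k2 y < 0" using Fy P by (simp add: mult_less_0_iff)
    then have y0: "y < 0" using k2pos[of y] by (cases "y < 0") auto
    have "k2 x < k2 y"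
    proof (rule DERIV_pos_imp_increasing[OF xy])
      fix z assume z: "x \<le> z" "z \<le> y"
      then have "Re (M z) \<le> 0" using sgn[of z] y0 by (cases "Re (M z) = 0") auto
      then have "\<rho>' z \<ge> 0" unfolding \<rho>'_def using af(2)[of z] by simp
      then have "u * (0 + \<rho>' z) + 2 * (1 - Re (Md z)) > 0" using af(3)[of z] u
        by (smt (verit) mult_nonneg_nonneg)
      then show "\<exists>D. (k2 has_real_derivative D) (at z) \<and> D > 0" using dk2 by blast
    qed
    then have kx: "k2 x < 0" using ky by simp
    obtain Q where "Q > 0" "F2' x = - Q * k2 x" using F2'k by blast
    then show ?thesis using kx by (simp add: mult_le_0_iff)
  qed
  have cM: "continuous_on UNIV M" unfolding M_def by (rule msc_line_cont[OF eta])
  have cF1': "continuous_on UNIV F1'" unfolding F1'_def Md_def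
    using lf(4) n1 by (intro continuous_intros cM) auto
  have cF2': "continuous_on UNIV F2'" unfolding F2'_def Md_def
    using lf(4) n2 by (intro continuous_intros cM) auto
  have bF1: "0 \<le> F1 t" "F1 t \<le> pi" for t
  proof -
    have "Im (1 - of_real u * M t) > 0" using u lf(1)[of t] by (simp add: mult_pos_neg)
    then have "0 \<le> Im (Ln (1 - of_real u * M t)) \<and> Im (Ln (1 - of_real u * M t)) \<le> pi"
      using Im_Ln_pos_le[OF n1[of t]] by simp
    then show "0 \<le> F1 t" "F1 t \<le> pi" unfolding F1_def by auto
  qed
  have bF2: "0 \<le> F2 t" "F2 t \<le> pi" for t
  proof -
    have "Im (1 - of_real (-u) * M t) < 0" using u lf(1)[of t] by (simp add: mult_pos_neg)
    then have "- pi \<le> Im (Ln (1 - of_real (-u) * M t)) \<and> Im (Ln (1 - of_real (-u) * M t)) \<le> 0"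
      by (rule Im_Ln_neg)
    then show "0 \<le> F2 t" "F2 t \<le> pi" unfolding F2_def by auto
  qed
  have I1: "(\<integral>\<^sup>+x. ennreal \<bar>F1' x\<bar> \<partial>lborel) \<le> ennreal (2 * (pi - 0))"
    by (rule TV_unimodal[OF dF1 cF1' bF1 uni1])
  have I2: "(\<integral>\<^sup>+x. ennreal \<bar>F2' x\<bar> \<partial>lborel) \<le> ennreal (2 * (pi - 0))"
    by (rule TV_unimodal[OF dF2 cF2' bF2 uni2])
  have GF: "Im (Gfun u (Complex E \<eta>)) = - F1' E + F2' E" for E
    using Gfun_split[OF eta u, of E] unfolding F1'_def F2'_def Md_def M_def by simp
  have m1: "F1' \<in> borel_measurable borel" by (rule borel_measurable_continuous_onI[OF cF1'])
  have m2: "F2' \<in> borel_measurable borel" by (rule borel_measurable_continuous_onI[OF cF2'])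
  have "(\<integral>\<^sup>+E. ennreal \<bar>Im (Gfun u (Complex E \<eta>))\<bar> \<partial>lborel)
       \<le> (\<integral>\<^sup>+E. ennreal \<bar>F1' E\<bar> + ennreal \<bar>F2' E\<bar> \<partial>lborel)"
    unfolding GF by (intro nn_integral_mono) (simp add: ennreal_plus[symmetric] del: ennreal_plus)
  also have "\<dots> = (\<integral>\<^sup>+E. ennreal \<bar>F1' E\<bar> \<partial>lborel) + (\<integral>\<^sup>+E. ennreal \<bar>F2' E\<bar> \<partial>lborel)"
    using m1 m2 by (intro nn_integral_add) auto
  also have "\<dots> \<le> ennreal (2 * (pi - 0)) + ennreal (2 * (pi - 0))" using I1 I2 by (rule add_mono)
  also have "\<dots> = ennreal (4 * pi)" by (simp add: ennreal_plus[symmetric] del: ennreal_plus)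
  finally show ?thesis .
qed


lemma bound_small:
  assumes eta: "\<eta> > 0" and u: "u > 0" "u < 1"
  shows "(\<integral>\<^sup>+E. ennreal \<bar>Im (Gfun u (Complex E \<eta>))\<bar> \<partial>lborel) \<le> ennreal (2 * u^2 / (1 - u^2) * (1 + pi))"
proof -
  define M where "M = (\<lambda>t. msc (Complex t \<eta>))"
  define Md where "Md = (\<lambda>t. (M t)^2/((M t)^2 - 1))"
  define \<rho> where "\<rho> = (\<lambda>t. (Re (M t))^2 + (Im (M t))^2)"
  define \<rho>' where "\<rho>' = (\<lambda>t. 2 * (Re (M t) * Re (Md t) + Im (M t) * Im (Md t)))"
  define L where "L = (\<lambda>t. Im (Ln (M t)))"
  define q where "q = (\<lambda>t. Im (Md t / M t))"
  define C where "C = 2 * u^2 / (1 - u^2)"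
  have uu: "u * u < 1" using u mult_strict_mono[of u 1 u 1] by simp
  have u2: "1 - u^2 > 0" using uu by (simp add: power2_eq_square)
  have C0: "C \<ge> 0" unfolding C_def using u2 by simp
  have lf: "Im (M t) < 0" "\<rho> t < 1" "\<rho> t > 0" "(M t)^2 \<noteq> 1" "M t \<noteq> 0" "cmod (M t) < 1" for t
    using line_facts[OF eta, of t] unfolding M_def \<rho>_def by auto
  have sgn: "t \<ge> 0 \<longleftrightarrow> Re (M t) \<ge> 0" for t using line_sign(1)[OF eta] unfolding M_def by auto
  have af: "Im (Md t / M t) > 0"
     "Re (M t) \<ge> 0 \<Longrightarrow> Re (M t) * Re (Md t) + Im (M t) * Im (Md t) \<le> 0"
     "Re (M t) \<le> 0 \<Longrightarrow> Re (M t) * Re (Md t) + Im (M t) * Im (Md t) \<ge> 0"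
     "Re (M t) * Re (Md t) + Im (M t) * Im (Md t) = \<rho> t * Re (Md t / M t)"
     "cmod (Md t / M t) \<le> \<bar>Re (Md t / M t)\<bar> + Im (Md t / M t)" for t
    using alg_facts[OF lf(1)[of t] _ lf(4)[of t]] lf(2)[of t] unfolding Md_def \<rho>_def by auto
  have drho: "(\<rho> has_real_derivative \<rho>' t) (at t)" for t
    using rho_deriv[OF eta, of t] unfolding \<rho>_def \<rho>'_def Md_def M_def by simp
  have dL: "(L has_real_derivative q t) (at t)" for t
    using LnM_deriv[OF eta, of t] unfolding L_def q_def Md_def M_def by simp
  have cM: "continuous_on UNIV M" unfolding M_def by (rule msc_line_cont[OF eta])
  have crho': "continuous_on UNIV \<rho>'" unfolding \<rho>'_def Md_def
    using lf(4) by (intro continuous_intros cM) auto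
  have cq: "continuous_on UNIV q" unfolding q_def Md_def
    using lf(4,5) by (intro continuous_intros cM) auto
  have brho: "0 \<le> \<rho> t" "\<rho> t \<le> 1" for t using lf(2,3)[of t] by auto
  have bL: "- pi \<le> L t" "L t \<le> 0" for t using Im_Ln_neg[OF lf(1)[of t]] unfolding L_def by auto
  have unirho: "\<rho>' x \<ge> 0" if "x < y" "\<rho>' y > 0" for x y
  proof -
    have "\<not> Re (M y) \<ge> 0" using af(2)[of y] that(2) unfolding \<rho>'_def by auto
    then have "y < 0" using sgn[of y] by auto
    then have "Re (M x) \<le> 0" using sgn[of x] that(1) by auto
    then show ?thesis using af(3)[of x] unfolding \<rho>'_def by simp
  qed
  have Irho: "(\<integral>\<^sup>+x. ennreal \<bar>\<rho>' x\<bar> \<partial>lborel) \<le> ennreal (2 * (1 - 0))"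
    by (rule TV_unimodal[OF drho crho' brho unirho])
  have IL: "(\<integral>\<^sup>+x. ennreal \<bar>q x\<bar> \<partial>lborel) \<le> ennreal (0 - (- pi))"
    by (rule TV_mono[OF dL cq bL]) (use af(1) in \<open>auto simp: q_def less_imp_le\<close>)
  have pw: "\<bar>Im (Gfun u (Complex t \<eta>))\<bar> \<le> C / 2 * \<bar>\<rho>' t\<bar> + C * \<bar>q t\<bar>" for t
  proof -
    have Imz: "Im (Complex t \<eta>) > 0" using eta by simp
    have G: "Gfun u (Complex t \<eta>) = 2 * (of_real u)^2 * M t * Md t / (1 - (of_real u)^2 * (M t)^2)"
      unfolding Gfun_def deriv_msc[OF Imz] M_def Md_def by simp
    have den: "cmod (1 - (of_real u)^2 * (M t)^2) \<ge> 1 - u^2"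
    proof -
      have "cmod ((of_real u)^2 * (M t)^2) = u^2 * (cmod (M t))^2" by (simp add: norm_mult norm_power)
      also have "\<dots> \<le> u^2" using lf(6)[of t] by (simp add: power_le_one mult_left_le)
      finally have "cmod ((of_real u)^2 * (M t)^2) \<le> u^2" .
      moreover have "cmod (1 - (of_real u)^2 * (M t)^2) \<ge> 1 - cmod ((of_real u)^2 * (M t)^2)"
        by (metis norm_one norm_triangle_ineq2)
      ultimately show ?thesis by linarith
    qed
    have mm: "cmod (M t * Md t) \<le> \<bar>\<rho>' t\<bar> / 2 + \<bar>q t\<bar>"
    proof -
      have e: "M t * Md t = (M t)^2 * (Md t / M t)" using lf(5)[of t] by (simp add: power2_eq_square)
      have n: "cmod ((M t)^2) = \<rho> t" unfolding norm_power cmod_power2 \<rho>_def ..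
      have "cmod (M t * Md t) = cmod ((M t)^2) * cmod (Md t / M t)" by (simp only: e norm_mult)
      then have "cmod (M t * Md t) = \<rho> t * cmod (Md t / M t)" by (simp only: n)
      also have "\<dots> \<le> \<rho> t * (\<bar>Re (Md t / M t)\<bar> + Im (Md t / M t))"
        using af(5)[of t] lf(3)[of t] by (simp add: mult_left_mono)
      also have "\<dots> = \<bar>\<rho> t * Re (Md t / M t)\<bar> + \<rho> t * Im (Md t / M t)"
        using lf(3)[of t] by (simp add: algebra_simps abs_mult)
      also have "\<dots> \<le> \<bar>\<rho>' t\<bar> / 2 + \<bar>q t\<bar>"
      proof -
        have "\<rho> t * Im (Md t / M t) \<le> Im (Md t / M t)" using lf(2)[of t] af(1)[of t]
          by (simp add: mult_left_le_one_le less_imp_le)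
        moreover have "\<bar>\<rho> t * Re (Md t / M t)\<bar> = \<bar>\<rho>' t\<bar> / 2" unfolding \<rho>'_def af(4) by simp
        ultimately show ?thesis unfolding q_def by simp
      qed
      finally show ?thesis .
    qed
    have "\<bar>Im (Gfun u (Complex t \<eta>))\<bar> \<le> cmod (Gfun u (Complex t \<eta>))" by (rule abs_Im_le_cmod)
    also have "\<dots> = 2 * u^2 * cmod (M t * Md t) / cmod (1 - (of_real u)^2 * (M t)^2)"
      unfolding G by (simp add: norm_mult norm_divide norm_power mult.assoc)
    also have "\<dots> \<le> 2 * u^2 * cmod (M t * Md t) / (1 - u^2)"
      using den u2 by (intro divide_left_mono) (auto intro!: mult_nonneg_nonneg mult_pos_pos)
    also have "\<dots> \<le> 2 * u^2 * (\<bar>\<rho>' t\<bar> / 2 + \<bar>q t\<bar>) / (1 - u^2)"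
      using mm u2 by (intro divide_right_mono mult_left_mono) auto
    also have "\<dots> = C / 2 * \<bar>\<rho>' t\<bar> + C * \<bar>q t\<bar>"
    proof -
      have gen: "\<And>w d x y :: real. d \<noteq> 0 \<Longrightarrow> 2 * w * (x / 2 + y) / d = 2 * w / d / 2 * x + 2 * w / d * y"
        by (simp add: field_simps)
      show ?thesis unfolding C_def by (rule gen) (use u2 in simp)
    qed
    finally show ?thesis .
  qed
  have m1: "\<rho>' \<in> borel_measurable borel" by (rule borel_measurable_continuous_onI[OF crho'])
  have m2: "q \<in> borel_measurable borel" by (rule borel_measurable_continuous_onI[OF cq])
  have "(\<integral>\<^sup>+E. ennreal \<bar>Im (Gfun u (Complex E \<eta>))\<bar> \<partial>lborel)
       \<le> (\<integral>\<^sup>+E. ennreal (C/2) * ennreal \<bar>\<rho>' E\<bar> + ennreal C * ennreal \<bar>q E\<bar> \<partial>lborel)"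
  proof (intro nn_integral_mono)
    fix E
    have "ennreal \<bar>Im (Gfun u (Complex E \<eta>))\<bar> \<le> ennreal (C / 2 * \<bar>\<rho>' E\<bar> + C * \<bar>q E\<bar>)"
      using pw by (intro ennreal_leI) auto
    also have "\<dots> = ennreal (C/2) * ennreal \<bar>\<rho>' E\<bar> + ennreal C * ennreal \<bar>q E\<bar>"
      using C0 by (simp add: ennreal_plus[symmetric] ennreal_mult[symmetric] del: ennreal_plus)
    finally show "ennreal \<bar>Im (Gfun u (Complex E \<eta>))\<bar> \<le> ennreal (C/2) * ennreal \<bar>\<rho>' E\<bar> + ennreal C * ennreal \<bar>q E\<bar>" .
  qed
  also have "\<dots> = ennreal (C/2) * (\<integral>\<^sup>+E. ennreal \<bar>\<rho>' E\<bar> \<partial>lborel) + ennreal C * (\<integral>\<^sup>+E. ennreal \<bar>q E\<bar> \<partial>lborel)"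
    using m1 m2 by (simp add: nn_integral_add nn_integral_cmult)
  also have "\<dots> \<le> ennreal (C/2) * ennreal (2 * (1 - 0)) + ennreal C * ennreal (0 - (- pi))"
    using Irho IL by (intro add_mono mult_left_mono) auto
  also have "\<dots> = ennreal C + ennreal (C * pi)"
  proof -
    have e1: "ennreal (C/2) * ennreal (2*(1-0)) = ennreal C" using C0 by (subst ennreal_mult[symmetric]) auto
    have e2: "ennreal C * ennreal (0 - - pi) = ennreal (C*pi)" using C0 by (subst ennreal_mult[symmetric]) auto
    show ?thesis by (simp only: e1 e2)
  qed
  also have "\<dots> = ennreal (C + C * pi)" using C0 by (intro ennreal_plus[symmetric]) auto
  also have "\<dots> = ennreal (2 * u^2 / (1 - u^2) * (1 + pi))" unfolding C_def by (simp add: algebra_simps add_divide_distrib)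
  finally show ?thesis .
qed



definition jb :: "real \<Rightarrow> real" where
  "jb u = (if u < 1/2 then 18 * u^2 else 4 * pi)"

lemma jb_nonneg: "jb u \<ge> 0" unfolding jb_def by simp

lemma Gline_cont:
  assumes eta: "\<eta> > 0" and u: "u > 0"
  shows "continuous_on UNIV (\<lambda>E. Im (Gfun u (Complex E \<eta>)))"
proof -
  define M where "M = (\<lambda>t. msc (Complex t \<eta>))"
  have lf: "Im (M t) < 0" "(M t)^2 \<noteq> 1" for t
    using line_facts[OF eta, of t] unfolding M_def by auto
  have n1: "1 - of_real u * M t \<noteq> 0" for t
  proof
    assume "1 - of_real u * M t = 0"
    then have "Im (1 - of_real u * M t) = 0" by simp
    then show False using lf(1)[of t] u by simp
  qed
  have n2: "1 + of_real u * M t \<noteq> 0" for t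
  proof
    assume "1 + of_real u * M t = 0"
    then have "Im (1 + of_real u * M t) = 0" by simp
    then show False using lf(1)[of t] u by simp
  qed
  have n3: "1 - (of_real u)^2 * (M t)^2 \<noteq> 0" for t
  proof -
    have "1 - (of_real u)^2 * (M t)^2 = (1 - of_real u * M t) * (1 + of_real u * M t)"
      by (simp add: algebra_simps power2_eq_square)
    then show ?thesis using n1[of t] n2[of t] by simp
  qed
  have e: "(\<lambda>E. Im (Gfun u (Complex E \<eta>))) = (\<lambda>E. Im (2 * (of_real u)^2 * M E * ((M E)^2 / ((M E)^2 - 1)) / (1 - (of_real u)^2 * (M E)^2)))"
  proof
    fix E
    have Imz: "Im (Complex E \<eta>) > 0" using eta by simp
    show "Im (Gfun u (Complex E \<eta>)) = Im (2 * (of_real u)^2 * M E * ((M E)^2 / ((M E)^2 - 1)) / (1 - (of_real u)^2 * (M E)^2))"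
      unfolding Gfun_def deriv_msc[OF Imz] M_def by simp
  qed
  have cM: "continuous_on UNIV M" unfolding M_def by (rule msc_line_cont[OF eta])
  show ?thesis unfolding e using lf(2) n3 by (intro continuous_intros cM) auto
qed

lemma J_le:
  assumes eta: "\<eta> > 0" and u: "u > 0"
  shows "(\<integral>\<^sup>+E. ennreal \<bar>Im (Gfun u (Complex E \<eta>))\<bar> \<partial>lborel) \<le> ennreal (jb u)"
proof (cases "u < 1/2")
  case True
  have uu: "u * u < 1/4" using u True mult_strict_mono[of u "1/2" u "1/2"] by simp
  then have u2: "u^2 < 1/4" by (simp add: power2_eq_square)
  have "(\<integral>\<^sup>+E. ennreal \<bar>Im (Gfun u (Complex E \<eta>))\<bar> \<partial>lborel) \<le> ennreal (2 * u^2 / (1 - u^2) * (1 + pi))"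
    by (rule bound_small[OF eta u]) (use True in simp)
  also have "\<dots> \<le> ennreal (jb u)"
  proof (rule ennreal_leI)
    have p: "pi < 4" by (rule pi_less_4)
    have d: "1 - u^2 > 3/4" using u2 by simp
    have "2 * u^2 / (1 - u^2) * (1 + pi) = u^2 * (2 * (1 + pi) / (1 - u^2))" by (simp add: field_simps)
    also have "\<dots> \<le> u^2 * 18"
    proof (rule mult_left_mono)
      show "2 * (1 + pi) / (1 - u^2) \<le> 18" using d p by (simp add: divide_le_eq)
    qed simp
    finally show "2 * u^2 / (1 - u^2) * (1 + pi) \<le> jb u" unfolding jb_def using True by simp
  qed
  finally show ?thesis .
next
  case False
  then show ?thesis using bound_big[OF eta u] unfolding jb_def by simp
qed

lemma prod_bound:
  fixes \<psi> \<phi> :: "real \<Rightarrow>\<^sub>C real"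
  assumes e1: "\<eta>1 > 0" and e2: "\<eta>2 > 0" and u: "u > 0"
  shows "(\<integral>\<^sup>+ p. ennreal (\<bar>\<psi> (fst p)\<bar> * \<bar>\<phi> (snd p)\<bar> *
         \<bar>Im (Gfun u (Complex (fst p) \<eta>1)) * Im (Gfun u (Complex (snd p) \<eta>2))\<bar>)
      \<partial>(lborel :: (real \<times> real) measure)) \<le> ennreal (norm \<psi> * norm \<phi> * (jb u)^2)"
proof -
  define a where "a = (\<lambda>E. Im (Gfun u (Complex E \<eta>1)))"
  define b where "b = (\<lambda>E. Im (Gfun u (Complex E \<eta>2)))"
  define f where "f = (\<lambda>x. ennreal (\<bar>\<psi> x\<bar> * \<bar>a x\<bar>))"
  define g where "g = (\<lambda>y. ennreal (\<bar>\<phi> y\<bar> * \<bar>b y\<bar>))"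
  have ca: "continuous_on UNIV a" unfolding a_def by (rule Gline_cont[OF e1 u])
  have cb: "continuous_on UNIV b" unfolding b_def by (rule Gline_cont[OF e2 u])
  have ma[measurable]: "a \<in> borel_measurable borel" by (rule borel_measurable_continuous_onI[OF ca])
  have mb[measurable]: "b \<in> borel_measurable borel" by (rule borel_measurable_continuous_onI[OF cb])
  have mpsi[measurable]: "apply_bcontfun \<psi> \<in> borel_measurable borel"
    by (rule borel_measurable_continuous_onI) simp
  have mphi[measurable]: "apply_bcontfun \<phi> \<in> borel_measurable borel"
    by (rule borel_measurable_continuous_onI) simp
  have mf[measurable]: "f \<in> borel_measurable lborel" unfolding f_def by measurable
  have mg[measurable]: "g \<in> borel_measurable lborel" unfolding g_def by measurable
  have eq: "(\<lambda>p. ennreal (\<bar>\<psi> (fst p)\<bar> * \<bar>\<phi> (snd p)\<bar> *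
         \<bar>Im (Gfun u (Complex (fst p) \<eta>1)) * Im (Gfun u (Complex (snd p) \<eta>2))\<bar>)) = (\<lambda>p. f (fst p) * g (snd p))"
    unfolding f_def g_def a_def b_def
    by (auto simp: ennreal_mult[symmetric] abs_mult mult_ac)
  have "(\<integral>\<^sup>+ p. f (fst p) * g (snd p) \<partial>(lborel :: (real \<times> real) measure))
      = (\<integral>\<^sup>+ p. f (fst p) * g (snd p) \<partial>(lborel \<Otimes>\<^sub>M lborel))"
    by (simp only: lborel_prod)
  also have "\<dots> = (\<integral>\<^sup>+ x. \<integral>\<^sup>+ y. f x * g y \<partial>lborel \<partial>lborel)"
  proof -
    have mp: "(\<lambda>p. f (fst p) * g (snd p)) \<in> borel_measurable (lborel \<Otimes>\<^sub>M lborel)" by measurable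
    show ?thesis using lborel.nn_integral_fst[OF mp] by simp
  qed
  also have "\<dots> = (\<integral>\<^sup>+ x. f x * (\<integral>\<^sup>+ y. g y \<partial>lborel) \<partial>lborel)"
    by (simp add: nn_integral_cmult)
  also have "\<dots> = (\<integral>\<^sup>+ x. f x \<partial>lborel) * (\<integral>\<^sup>+ y. g y \<partial>lborel)"
    by (simp add: nn_integral_multc)
  also have "\<dots> \<le> ennreal (norm \<psi> * jb u) * ennreal (norm \<phi> * jb u)"
  proof (intro mult_mono)
    have "(\<integral>\<^sup>+ x. f x \<partial>lborel) \<le> (\<integral>\<^sup>+ x. ennreal (norm \<psi>) * ennreal \<bar>a x\<bar> \<partial>lborel)"
      unfolding f_def by (intro nn_integral_mono)
        (simp add: ennreal_mult[symmetric] mult_right_mono norm_bounded[of \<psi>, simplified])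
    also have "\<dots> = ennreal (norm \<psi>) * (\<integral>\<^sup>+ x. ennreal \<bar>a x\<bar> \<partial>lborel)"
      by (rule nn_integral_cmult) measurable
    also have "\<dots> \<le> ennreal (norm \<psi>) * ennreal (jb u)"
      unfolding a_def by (intro mult_left_mono J_le[OF e1 u]) auto
    also have "\<dots> = ennreal (norm \<psi> * jb u)" using jb_nonneg by (simp add: ennreal_mult)
    finally show "(\<integral>\<^sup>+ x. f x \<partial>lborel) \<le> ennreal (norm \<psi> * jb u)" .
    have "(\<integral>\<^sup>+ x. g x \<partial>lborel) \<le> (\<integral>\<^sup>+ x. ennreal (norm \<phi>) * ennreal \<bar>b x\<bar> \<partial>lborel)"
      unfolding g_def by (intro nn_integral_mono)
        (simp add: ennreal_mult[symmetric] mult_right_mono norm_bounded[of \<phi>, simplified])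
    also have "\<dots> = ennreal (norm \<phi>) * (\<integral>\<^sup>+ x. ennreal \<bar>b x\<bar> \<partial>lborel)"
      by (rule nn_integral_cmult) measurable
    also have "\<dots> \<le> ennreal (norm \<phi>) * ennreal (jb u)"
      unfolding b_def by (intro mult_left_mono J_le[OF e2 u]) auto
    also have "\<dots> = ennreal (norm \<phi> * jb u)" using jb_nonneg by (simp add: ennreal_mult)
    finally show "(\<integral>\<^sup>+ x. g x \<partial>lborel) \<le> ennreal (norm \<phi> * jb u)" .
  qed auto
  also have "\<dots> = ennreal (norm \<psi> * norm \<phi> * (jb u)^2)"
    using jb_nonneg by (simp add: ennreal_mult[symmetric] power2_eq_square mult_ac)
  finally show ?thesis unfolding eq .
qed

lemma Ifun_le:
  assumes u: "u > 0"
  shows "Ifun \<psi> \<phi> u \<le> ennreal (norm \<psi> * norm \<phi> * (jb u)^2)"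
  unfolding Ifun_def
proof (rule SUP_least)
  fix \<eta> :: "real \<times> real" assume "\<eta> \<in> {0<..1} \<times> {0<..1}"
  then have "fst \<eta> > 0" "snd \<eta> > 0" by auto
  then show "(\<integral>\<^sup>+ p. ennreal (\<bar>\<psi> (fst p)\<bar> * \<bar>\<phi> (snd p)\<bar> *
         \<bar>Im (Gfun u (Complex (fst p) (fst \<eta>))) * Im (Gfun u (Complex (snd p) (snd \<eta>)))\<bar>) \<partial>lborel)
      \<le> ennreal (norm \<psi> * norm \<phi> * (jb u)^2)"
    by (rule prod_bound[OF _ _ u])
qed



lemma int1:
  assumes "\<alpha> < 4"
  shows "(\<integral>\<^sup>+x. ennreal (indicator {0..1/2} x * x powr (3-\<alpha>)) \<partial>lborel) = ennreal ((1/2) powr (4-\<alpha>) / (4-\<alpha>))"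
proof -
  have h: "((\<lambda>x. x powr (3-\<alpha>)) has_integral ((1/2) powr (3-\<alpha>+1)/(3-\<alpha>+1))) {0..1/2}"
    by (rule has_integral_powr_from_0) (use assms in auto)
  have e: "(\<lambda>x::real. indicator {0..1/2} x * x powr (3-\<alpha>)) = (\<lambda>x. if x \<in> {0..1/2} then x powr (3-\<alpha>) else 0)"
    by (auto simp: indicator_def)
  have h2: "((\<lambda>x::real. indicator {0..1/2} x * x powr (3-\<alpha>)) has_integral ((1/2) powr (4-\<alpha>)/(4-\<alpha>))) UNIV"
    unfolding e has_integral_restrict_UNIV using h by (simp add: algebra_simps)
  show ?thesis
    by (rule nn_integral_has_integral_lborel[OF _ _ h2]) (auto simp: indicator_def)
qed

lemma int2:
  assumes "\<alpha> > 0"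
  shows "(\<integral>\<^sup>+x. ennreal (indicator {1/2..} x * x powr (-1-\<alpha>)) \<partial>lborel) = ennreal ((1/2) powr (-\<alpha>) / \<alpha>)"
proof -
  have h: "((\<lambda>x. x powr (-1-\<alpha>)) has_integral (- ((1/2) powr (-1-\<alpha>+1)) / (-1-\<alpha>+1))) {1/2..}"
    by (rule has_integral_powr_to_inf) (use assms in auto)
  have e: "(\<lambda>x::real. indicator {1/2..} x * x powr (-1-\<alpha>)) = (\<lambda>x. if x \<in> {1/2..} then x powr (-1-\<alpha>) else 0)"
    by (auto simp: indicator_def)
  have h2: "((\<lambda>x::real. indicator {1/2..} x * x powr (-1-\<alpha>)) has_integral ((1/2) powr (-\<alpha>) / \<alpha>)) UNIV"
    unfolding e has_integral_restrict_UNIV using h by (simp add: algebra_simps)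
  show ?thesis
    by (rule nn_integral_has_integral_lborel[OF _ _ h2]) (auto simp: indicator_def)
qed

lemma jb_sq: "(jb u)^2 \<le> 18^2 * (if u < 1/2 then u^4 else 1)"
proof (cases "u < 1/2")
  case True then show ?thesis unfolding jb_def by (simp add: power2_eq_square power4_eq_xxxx)
next
  case False
  have "4 * pi \<le> 18" using pi_less_4 by simp
  then have "(4*pi)^2 \<le> 18^2" by (intro power_mono) auto
  then show ?thesis unfolding jb_def using False by simp
qed


lemma final_ineq:
  assumes a2: "2 < \<alpha>" and a4: "\<alpha> < 4" and K: "K \<ge> 0"
  shows "K * 18^2 * ((1/2) powr (4-\<alpha>) / (4-\<alpha>)) + K * (16 * pi^2) * ((1/2) powr (-\<alpha>) / \<alpha>)
         \<le> 18^2 * 2 powr \<alpha> / (4 - \<alpha>) * K"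
proof -
  define P where "P = 2 powr \<alpha>"
  have P: "P > 0" unfolding P_def by simp
  have p1: "(1/2) powr (4-\<alpha>) = P / 16"
  proof -
    have "(1/2::real) powr (4-\<alpha>) = 1 / 2 powr (4 - \<alpha>)" by (simp add: powr_divide)
    also have "2 powr (4 - \<alpha>) = 16 / P" unfolding P_def by (simp add: powr_diff)
    finally show ?thesis using P by simp
  qed
  have p2: "(1/2) powr (-\<alpha>) = P"
    unfolding P_def by (simp add: powr_divide powr_minus)
  have pi2: "16 * pi^2 \<le> 256"
  proof -
    have "pi^2 \<le> 4^2" using pi_less_4 pi_gt_zero by (intro power_mono) auto
    then show ?thesis by simp
  qed
  have d: "4 - \<alpha> > 0" using a4 by simp
  have ia: "1 / \<alpha> \<le> 1 / (4 - \<alpha>)" using a2 d by (intro divide_left_mono) auto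
  have "18^2 * ((1/2) powr (4-\<alpha>) / (4-\<alpha>)) + (16 * pi^2) * ((1/2) powr (-\<alpha>) / \<alpha>)
      = P * (18^2 / 16 / (4-\<alpha>) + 16 * pi^2 * (1/\<alpha>))"
    unfolding p1 p2 using d a2 by (simp add: field_simps)
  also have "\<dots> \<le> P * (18^2 / 16 / (4-\<alpha>) + 256 * (1/(4-\<alpha>)))"
  proof (intro mult_left_mono add_left_mono)
    show "16 * pi\<^sup>2 * (1 / \<alpha>) \<le> 256 * (1 / (4 - \<alpha>))"
      using pi2 ia a2 d by (intro mult_mono) auto
  qed (use P in auto)
  also have "\<dots> = P * (1105/4) / (4 - \<alpha>)"
  proof -
    have g: "\<And>t::real. t \<noteq> 0 \<Longrightarrow> P * (18^2 / 16 / t + 256 * (1 / t)) = P * (1105/4) / t"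
      by (simp add: field_simps)
    show ?thesis by (rule g) (use d in simp)
  qed
  also have "\<dots> \<le> 18^2 * P / (4 - \<alpha>)" using P d by (intro divide_right_mono) auto
  finally have "18^2 * ((1/2) powr (4-\<alpha>) / (4-\<alpha>)) + (16 * pi^2) * ((1/2) powr (-\<alpha>) / \<alpha>) \<le> 18^2 * P / (4 - \<alpha>)" .
  then have "K * (18^2 * ((1/2) powr (4-\<alpha>) / (4-\<alpha>)) + (16 * pi^2) * ((1/2) powr (-\<alpha>) / \<alpha>)) \<le> K * (18^2 * P / (4 - \<alpha>))"
    using K by (rule mult_left_mono)
  then show ?thesis unfolding P_def by (simp add: algebra_simps)
qed

theorem lemma5p4:
  fixes \<alpha> :: real and \<psi> \<phi> :: "real \<Rightarrow>\<^sub>C real"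
  assumes "2 < \<alpha>" and "\<alpha> < 4"
  shows "(\<forall>u>0. Ifun \<psi> \<phi> u \<le>
            ennreal (18^2 * norm \<psi> * norm \<phi> * (if u < 1/2 then u^4 else 1)))
       \<and> (\<integral>\<^sup>+ u. indicator {0<..} u * (ennreal (1 / u powr (1 + \<alpha>)) * Ifun \<psi> \<phi> u) \<partial>lborel)
            \<le> ennreal (18^2 * 2 powr \<alpha> / (4 - \<alpha>) * norm \<psi> * norm \<phi>)"
proof
  define K where "K = norm \<psi> * norm \<phi>"
  have K: "K \<ge> 0" unfolding K_def by simp
  show "\<forall>u>0. Ifun \<psi> \<phi> u \<le> ennreal (18^2 * norm \<psi> * norm \<phi> * (if u < 1/2 then u^4 else 1))"
  proof (intro allI impI)
    fix u :: real assume u: "u > 0"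
    have "Ifun \<psi> \<phi> u \<le> ennreal (K * (jb u)^2)" using Ifun_le[OF u] unfolding K_def .
    also have "\<dots> \<le> ennreal (K * (18^2 * (if u < 1/2 then u^4 else 1)))"
      using jb_sq[of u] K by (intro ennreal_leI mult_left_mono) auto
    finally show "Ifun \<psi> \<phi> u \<le> ennreal (18^2 * norm \<psi> * norm \<phi> * (if u < 1/2 then u^4 else 1))"
      unfolding K_def by (simp add: mult_ac)
  qed
  define h1 where "h1 = (\<lambda>x::real. ennreal (indicator {0..1/2} x * x powr (3-\<alpha>)))"
  define h2 where "h2 = (\<lambda>x::real. ennreal (indicator {1/2..} x * x powr (-1-\<alpha>)))"
  have pw: "indicator {0<..} u * (ennreal (1 / u powr (1 + \<alpha>)) * Ifun \<psi> \<phi> u)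
           \<le> ennreal (K * 18^2) * h1 u + ennreal (K * (16 * pi^2)) * h2 u" for u :: real
  proof (cases "u > 0")
    case False then show ?thesis by simp
  next
    case u: True
    have "indicator {0<..} u * (ennreal (1 / u powr (1 + \<alpha>)) * Ifun \<psi> \<phi> u)
        = ennreal (1 / u powr (1 + \<alpha>)) * Ifun \<psi> \<phi> u" using u by simp
    also have "\<dots> \<le> ennreal (1 / u powr (1 + \<alpha>)) * ennreal (K * (jb u)^2)"
      using Ifun_le[OF u] unfolding K_def by (rule mult_left_mono) simp
    also have "\<dots> = ennreal (K * (jb u)^2 / u powr (1 + \<alpha>))"
      using K by (simp add: ennreal_mult[symmetric])
    also have "\<dots> \<le> ennreal (K * 18^2) * h1 u + ennreal (K * (16 * pi^2)) * h2 u"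
    proof (cases "u < 1/2")
      case True
      have "K * (jb u)^2 / u powr (1 + \<alpha>) = K * 18^2 * (u powr 4 / u powr (1 + \<alpha>))"
        unfolding jb_def using True u by (simp add: power2_eq_square power4_eq_xxxx)
      also have "u powr 4 / u powr (1 + \<alpha>) = u powr (3 - \<alpha>)"
        by (simp add: powr_diff[symmetric])
      finally have e: "K * (jb u)^2 / u powr (1 + \<alpha>) = K * 18^2 * (indicator {0..1/2} u * u powr (3 - \<alpha>))"
        using True u by simp
      show ?thesis unfolding e h1_def using K
        by (simp add: ennreal_mult[symmetric] add_increasing2)
    next
      case False
      have e: "K * (jb u)^2 / u powr (1 + \<alpha>) = K * (16 * pi^2) * (indicator {1/2..} u * u powr (-1 - \<alpha>))"
      proof -
        have "u powr (-1 - \<alpha>) = 1 / u powr (1 + \<alpha>)"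
          using powr_minus[of u "1 + \<alpha>"] by (simp add: divide_inverse)
        then show ?thesis unfolding jb_def using False by (simp add: power2_eq_square)
      qed
      show ?thesis unfolding e h2_def using K
        by (simp add: ennreal_mult[symmetric] add_increasing)
    qed
    finally show ?thesis .
  qed
  have mh1[measurable]: "h1 \<in> borel_measurable borel" unfolding h1_def by measurable
  have mh2[measurable]: "h2 \<in> borel_measurable borel" unfolding h2_def by measurable
  have "(\<integral>\<^sup>+ u. indicator {0<..} u * (ennreal (1 / u powr (1 + \<alpha>)) * Ifun \<psi> \<phi> u) \<partial>lborel)
      \<le> (\<integral>\<^sup>+ u. ennreal (K * 18^2) * h1 u + ennreal (K * (16 * pi^2)) * h2 u \<partial>lborel)"
    by (intro nn_integral_mono pw)
  also have "\<dots> = ennreal (K * 18^2) * (\<integral>\<^sup>+ u. h1 u \<partial>lborel) + ennreal (K * (16 * pi^2)) * (\<integral>\<^sup>+ u. h2 u \<partial>lborel)"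
    by (simp add: nn_integral_add nn_integral_cmult)
  also have "\<dots> = ennreal (K * 18^2) * ennreal ((1/2) powr (4-\<alpha>) / (4-\<alpha>)) + ennreal (K * (16 * pi^2)) * ennreal ((1/2) powr (-\<alpha>) / \<alpha>)"
    unfolding h1_def h2_def using int1[OF assms(2)] int2[of \<alpha>] assms(1) by simp
  also have "\<dots> = ennreal (K * 18^2 * ((1/2) powr (4-\<alpha>) / (4-\<alpha>)) + K * (16 * pi^2) * ((1/2) powr (-\<alpha>) / \<alpha>))"
    using K assms by (simp add: ennreal_mult[symmetric] ennreal_plus[symmetric] del: ennreal_plus)
  also have "\<dots> \<le> ennreal (18^2 * 2 powr \<alpha> / (4 - \<alpha>) * K)"
    by (rule ennreal_leI final_ineq[OF assms K])+
  finally show "(\<integral>\<^sup>+ u. indicator {0<..} u * (ennreal (1 / u powr (1 + \<alpha>)) * Ifun \<psi> \<phi> u) \<partial>lborel)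
            \<le> ennreal (18^2 * 2 powr \<alpha> / (4 - \<alpha>) * norm \<psi> * norm \<phi>)"
    unfolding K_def by (simp add: mult_ac)
qed


end
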